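(* Let $d\ge1$ and $q\ge2$ even. There exist a unique constant $C\ne0$ and a unique polynomial $p_{q+1}$ whose monomials have degrees in $\{1,3,\ldots,q+1\}$ such that $\bar p_{q+1,1}(x)=p_{q+1}(x)\mathbbm{1}_{x\le1}$ satisfies $\bar p_{q+1,1}\in\mathcal M_{d,1,q+1}$, $\int_0^\infty x^{d+q}\bar p_{q+1,1}(x)\,dx=C$, and $p_{q+1}(1)=0$. Moreover, this $\bar p_{q+1,1}$ equals $G^{B(1)}_{d,q}$, the derivative of $G^B_{d,q}$.
   Context: $B_{d,i}(g)=\int_0^\infty x^{d-1+i}g(x)dx$, $b_d=2\pi^{d/2}/\Gamma(d/2)$. $\mathcal M_{d,1,q+1}$: functions $g$ on $[0,\infty)$ with $B_{d,1}(g)=-d\,b_d^{-1}$, $B_{d,i}(g)=0$ for $i=3,5,\ldots,q-1$, and $B_{d,q+1}(g)\ne0$. $G^B_{d,q}(x)=\frac{\Gamma(\frac{d+q}{2})}{\pi^{d/2}\Gamma(\frac q2)}P^{(\frac d2,-2)}_{\frac q2+1}(1-2x^2)\mathbbm{1}_{x\le1}$, where $P^{(\alpha,\beta)}_n(x)=\frac{(-1)^n}{2^nn!}(1-x)^{-\alpha}(1+x)^{-\beta}\frac{d^n}{dx^n}[(1-x)^{n+\alpha}(1+x)^{n+\beta}]$ is the Jacobi polynomial. *)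

theory Defs
  imports "HOL-Analysis.Analysis" "HOL-Computational_Algebra.Polynomial"
begin

definition Bmom :: "nat \<Rightarrow> nat \<Rightarrow> (real \<Rightarrow> real) \<Rightarrow> real" where
  "Bmom d i g = integral {0..} (\<lambda>x. x ^ (d - 1 + i) * g x)"

text \<open>b_d = 2 pi^(d/2) / Gamma(d/2), the surface area of the unit sphere.\<close>
definition bsph :: "nat \<Rightarrow> real" where
  "bsph d = 2 * pi powr (real d / 2) / Gamma (real d / 2)"

text \<open>The class M_{d,1,q+1}.  The moments involved are required to exist
  (integrability), which the paper leaves implicit.\<close>
definition M_class :: "nat \<Rightarrow> nat \<Rightarrow> (real \<Rightarrow> real) \<Rightarrow> bool" where
  "M_class d q g \<longleftrightarrow>
     (\<forall>i\<in>{1..q+1}. odd i \<longrightarrow> (\<lambda>x. x ^ (d - 1 + i) * g x) integrable_on {0..}) \<and>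
     Bmom d 1 g = - real d / bsph d \<and>
     (\<forall>i\<in>{3..q-1}. odd i \<longrightarrow> Bmom d i g = 0) \<and>
     Bmom d (q + 1) g \<noteq> 0"

text \<open>Jacobi polynomial via the Rodrigues formula (beta an integer, alpha real).
  The factors in (1+y) are integer powers; those in (1-y) real powers, so the
  formula is literal for -1 <= y < 1.\<close>
definition jacobiP :: "nat \<Rightarrow> real \<Rightarrow> int \<Rightarrow> real \<Rightarrow> real" where
  "jacobiP n \<alpha> \<beta> y =
     (-1) ^ n / (2 ^ n * fact n) * (1 - y) powr (- \<alpha>) * (1 + y) powi (- \<beta>) *
     (deriv ^^ n) (\<lambda>t. (1 - t) powr (real n + \<alpha>) * (1 + t) powi (int n + \<beta>)) y"

definition GB :: "nat \<Rightarrow> nat \<Rightarrow> real \<Rightarrow> real" where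
  "GB d q x = (if x \<le> 1 then
      Gamma ((real d + real q) / 2) / (pi powr (real d / 2) * Gamma (real q / 2)) *
      jacobiP (q div 2 + 1) (real d / 2) (-2) (1 - 2 * x\<^sup>2) else 0)"

definition pbar :: "real poly \<Rightarrow> real \<Rightarrow> real" where
  "pbar p x = (if x \<le> 1 then poly p x else 0)"

end

theory Submission
  imports Defs
begin

lemma mono_int: "((\<lambda>x::real. x ^ r) has_integral 1 / (real r + 1)) {0..1}"
proof -
  have d: "((\<lambda>x::real. x ^ (r+1) / (real r + 1)) has_real_derivative x ^ r) (at x)" for x
  proof -
    have "((\<lambda>x::real. x ^ (r+1) / (real r + 1)) has_real_derivative (real (r+1) * x ^ (r+1-1)) / (real r + 1)) (at x)"
      by (intro DERIV_cdivide) (rule derivative_eq_intros refl | simp)+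
    moreover have "(real (r+1) * x ^ (r+1-1)) / (real r + 1) = x ^ r" by (simp add: field_simps)
    ultimately show ?thesis by metis
  qed
  have "((\<lambda>x::real. x ^ r) has_integral ((\<lambda>x. x ^ (r+1) / (real r + 1)) 1 - (\<lambda>x. x ^ (r+1) / (real r + 1)) 0)) {0..1}"
    apply (rule fundamental_theorem_of_calculus)
     apply simp
    using d by (auto intro: has_real_derivative_iff_has_vector_derivative[THEN iffD1, THEN has_vector_derivative_at_within])
  then show ?thesis by simp
qed

lemma pbar_int:
  assumes "((\<lambda>x. x ^ r * poly p x) has_integral I) {0..1}"
  shows "((\<lambda>x. x ^ r * pbar p x) has_integral I) {0..}"
proof -
  have "(\<lambda>x::real. if x \<in> {0..} then x ^ r * pbar p x else 0) = (\<lambda>x. if x \<in> {0..1} then x ^ r * poly p x else 0)"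
    by (auto simp: pbar_def)
  then have "((\<lambda>x::real. if x \<in> {0..} then x ^ r * pbar p x else 0) has_integral I) UNIV"
    using assms by (simp only: has_integral_restrict_UNIV)
  then show ?thesis by (simp only: has_integral_restrict_UNIV)
qed

lemma cauchy_uniq:
  fixes a :: "nat \<Rightarrow> real" and S :: "real set"
  assumes finS: "finite S" and cardS: "card S = m" and pos: "\<forall>s\<in>S. s > 0"
    and mom: "\<forall>s\<in>S. (\<Sum>j\<le>m. a j / (s + 2 * real j)) = 0"
    and tot: "(\<Sum>j\<le>m. a j) = 0"
  shows "\<forall>j\<le>m. a j = 0"
proof -
  define Q where "Q j = (\<Prod>i\<in>{..m}-{j}. [:2 * real i, 1:])" for j
  define N where "N = (\<Sum>j\<le>m. smult (a j) (Q j))"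
  have polyQ: "poly (Q j) s = (\<Prod>i\<in>{..m}-{j}. s + 2 * real i)" for j s
    by (simp add: Q_def poly_prod add.commute)
  have cardm: "card ({..m}-{j}) = m" if "j \<le> m" for j
    using that by simp
  have degQ: "degree (Q j) = m" if "j \<le> m" for j
  proof -
    have "degree (Q j) = (\<Sum>i\<in>{..m}-{j}. degree [:2 * real i, 1:])"
      unfolding Q_def by (rule degree_prod_eq_sum_degree) auto
    also have "\<dots> = m" using cardm[OF that] by simp
    finally show ?thesis .
  qed
  have lcQ: "coeff (Q j) m = 1" if "j \<le> m" for j
  proof -
    have "coeff (Q j) m = lead_coeff (Q j)" using degQ[OF that] by simp
    also have "\<dots> = 1" unfolding Q_def lead_coeff_prod by simp
    finally show ?thesis .
  qed
  have degN: "degree N \<le> m"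
    unfolding N_def
    by (rule degree_sum_le) (auto intro: order.trans[OF degree_smult_le] simp: degQ)
  have coeffN: "coeff N m = 0"
    unfolding N_def coeff_sum using tot by (simp add: lcQ)
  have rootN: "poly N s = 0" if "s \<in> S" for s
  proof -
    have sp: "s > 0" using pos that by auto
    have nz: "s + 2 * real i \<noteq> 0" for i using sp by (smt (verit) of_nat_0_le_iff)
    have "poly N s = (\<Sum>j\<le>m. a j * (\<Prod>i\<in>{..m}-{j}. s + 2 * real i))"
      by (simp add: N_def poly_sum polyQ)
    also have "\<dots> = (\<Sum>j\<le>m. a j / (s + 2 * real j) * (\<Prod>i\<le>m. s + 2 * real i))"
    proof (rule sum.cong[OF refl])
      fix j assume "j \<in> {..m}"
      then have "(\<Prod>i\<le>m. s + 2 * real i) = (s + 2 * real j) * (\<Prod>i\<in>{..m}-{j}. s + 2 * real i)"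
        by (simp add: prod.remove)
      then show "a j * (\<Prod>i\<in>{..m}-{j}. s + 2 * real i) = a j / (s + 2 * real j) * (\<Prod>i\<le>m. s + 2 * real i)"
        using nz[of j] by simp
    qed
    also have "\<dots> = (\<Sum>j\<le>m. a j / (s + 2 * real j)) * (\<Prod>i\<le>m. s + 2 * real i)"
      by (simp add: sum_distrib_right)
    also have "\<dots> = 0" using mom that by simp
    finally show ?thesis .
  qed
  have N0: "N = 0"
  proof (rule ccontr)
    assume "N \<noteq> 0"
    have "degree N \<noteq> m"
    proof
      assume "degree N = m"
      then have "coeff N m = lead_coeff N" by simp
      with \<open>N \<noteq> 0\<close> coeffN show False by simp
    qed
    with degN have lt: "degree N < m" by simp
    have "S \<subseteq> {x. poly N x = 0}" using rootN by auto
    then have "card S \<le> card {x. poly N x = 0}"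
      by (intro card_mono poly_roots_finite \<open>N \<noteq> 0\<close>)
    also have "\<dots> \<le> degree N" by (rule card_poly_roots_bound) fact
    finally show False using lt cardS by simp
  qed
  show ?thesis
  proof (intro allI impI)
    fix j assume jm: "j \<le> m"
    have z: "poly (Q j') (- 2 * real j) = 0" if "j' \<le> m" "j' \<noteq> j" for j'
    proof -
      have "j \<in> {..m}-{j'}" using jm that by auto
      then show ?thesis unfolding polyQ
        by (intro prod_zero) auto
    qed
    have "poly N (- 2 * real j) = (\<Sum>j'\<le>m. a j' * poly (Q j') (- 2 * real j))"
      by (simp add: N_def poly_sum)
    also have "\<dots> = a j * poly (Q j) (- 2 * real j)"
      using jm z by (subst sum.remove[of _ j]) auto
    finally have e: "a j * poly (Q j) (- 2 * real j) = 0" using N0 by simp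
    have "poly (Q j) (- 2 * real j) \<noteq> 0"
      unfolding polyQ by (subst prod_zero_iff) auto
    with e show "a j = 0" by simp
  qed
qed

lemma alt_poly:
  fixes p :: "real poly"
  assumes "degree p < N"
  shows "(\<Sum>i\<le>N. (-1)^i * real (N choose i) * poly p (real i)) = 0"
  using assms
proof (induction N arbitrary: p)
  case 0 then show ?case by simp
next
  case (Suc M)
  obtain a r where pr: "p = pCons a r" by (cases p) auto
  have "(\<Sum>i\<le>Suc M. (-1)^i * real (Suc M choose i) * poly p (real i))
      = a * (\<Sum>i\<le>Suc M. (-1)^i * real (Suc M choose i))
        + (\<Sum>i\<le>Suc M. (-1)^i * real (Suc M choose i) * real i * poly r (real i))"
    by (simp add: pr sum_distrib_left sum.distrib algebra_simps)
  also have "(\<Sum>i\<le>Suc M. (-1)^i * real (Suc M choose i)) = 0"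
    by (rule choose_alternating_sum) simp
  also have "(\<Sum>i\<le>Suc M. (-1)^i * real (Suc M choose i) * real i * poly r (real i)) = 0"
  proof (cases "r = 0")
    case True then show ?thesis by simp
  next
    case False
    then have "degree p = Suc (degree r)" by (simp add: pr)
    with Suc.prems have dr: "degree r < M" by simp
    define r' where "r' = pcompose r [:1, 1:]"
    have dr': "degree r' < M" using dr by (simp add: r'_def degree_pcompose)
    have pr': "poly r' x = poly r (x + 1)" for x by (simp add: r'_def poly_pcompose add.commute)
    have "(\<Sum>i\<le>Suc M. (-1)^i * real (Suc M choose i) * real i * poly r (real i))
        = (\<Sum>k\<le>M. (-1)^(Suc k) * real (Suc M choose Suc k) * real (Suc k) * poly r (real (Suc k)))"
      by (subst sum.atMost_Suc_shift) simp
    also have "\<dots> = (\<Sum>k\<le>M. - real (Suc M) * ((-1)^k * real (M choose k) * poly r' (real k)))"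
    proof (rule sum.cong[OF refl])
      fix k
      define c where "c = real (Suc M choose Suc k)"
      have h: "c * real (Suc k) = real (Suc M) * real (M choose k)"
        unfolding c_def using Suc_times_binomial[of k M] by (metis mult.commute of_nat_mult)
      have "(-1)^(Suc k) * c * real (Suc k) * poly r (real (Suc k))
          = - (c * real (Suc k)) * ((-1)^k * poly r (real k + 1))"
        by (simp add: algebra_simps)
      also have "\<dots> = - real (Suc M) * ((-1)^k * real (M choose k) * poly r' (real k))"
        unfolding h pr' by (simp add: algebra_simps)
      finally show "(-1)^(Suc k) * real (Suc M choose Suc k) * real (Suc k) * poly r (real (Suc k))
          = - real (Suc M) * ((-1)^k * real (M choose k) * poly r' (real k))"
        unfolding c_def .
    qed
    also have "\<dots> = - real (Suc M) * (\<Sum>k\<le>M. (-1)^k * real (M choose k) * poly r' (real k))"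
      by (simp add: sum_distrib_left)
    also have "\<dots> = 0" using Suc.IH[OF dr'] by simp
    finally show ?thesis .
  qed
  finally show ?case by simp
qed

lemma alt_pascal:
  fixes f :: "nat \<Rightarrow> real"
  shows "(\<Sum>i\<le>Suc M. (-1)^i * real (Suc M choose i) * f i)
       = (\<Sum>i\<le>M. (-1)^i * real (M choose i) * (f i - f (Suc i)))"
proof -
  have c: "real (Suc M choose i) = real (M choose i) + (if i = 0 then 0 else real (M choose (i - 1)))" for i
    by (cases i) auto
  have "(\<Sum>i\<le>Suc M. (-1)^i * real (Suc M choose i) * f i)
      = (\<Sum>i\<le>Suc M. (-1)^i * real (M choose i) * f i)
        + (\<Sum>i\<le>Suc M. (-1)^i * (if i = 0 then 0 else real (M choose (i - 1))) * f i)"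
    by (simp add: c sum.distrib algebra_simps)
  also have "(\<Sum>i\<le>Suc M. (-1)^i * real (M choose i) * f i) = (\<Sum>i\<le>M. (-1)^i * real (M choose i) * f i)"
    by simp
  also have "(\<Sum>i\<le>Suc M. (-1)^i * (if i = 0 then 0 else real (M choose (i - 1))) * f i)
      = (\<Sum>i\<le>M. (-1)^(Suc i) * real (M choose i) * f (Suc i))"
    by (subst sum.atMost_Suc_shift) simp
  finally show ?thesis by (simp add: sum.distrib[symmetric] algebra_simps sum_subtractf[symmetric])
qed

lemma alt_recip:
  fixes a :: real
  assumes "a > 0"
  shows "(\<Sum>i\<le>N. (-1)^i * real (N choose i) * (1 / (a + real i))) = fact N / pochhammer a (Suc N)"
  using assms
proof (induction N arbitrary: a)
  case 0 then show ?case by simp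
next
  case (Suc M)
  have "(\<Sum>i\<le>Suc M. (-1)^i * real (Suc M choose i) * (1 / (a + real i)))
      = (\<Sum>i\<le>M. (-1)^i * real (M choose i) * (1 / (a + real i) - 1 / (a + real (Suc i))))"
    by (rule alt_pascal)
  also have "\<dots> = (\<Sum>i\<le>M. (-1)^i * real (M choose i) * (1 / (a + real i)))
                  - (\<Sum>i\<le>M. (-1)^i * real (M choose i) * (1 / ((a + 1) + real i)))"
    by (simp add: sum_subtractf[symmetric] algebra_simps)
  also have "\<dots> = fact M / pochhammer a (Suc M) - fact M / pochhammer (a + 1) (Suc M)"
    using Suc.IH[of a] Suc.IH[of "a+1"] Suc.prems by simp
  also have "\<dots> = fact (Suc M) / pochhammer a (Suc (Suc M))"
  proof -
    define X where "X = pochhammer (a + 1) M"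
    have X: "X > 0" unfolding X_def using Suc.prems by (intro pochhammer_pos) simp
    have e1: "pochhammer a (Suc M) = a * X" by (simp add: X_def pochhammer_rec)
    have e2: "pochhammer (a+1) (Suc M) = (a + 1 + real M) * X" by (simp add: X_def pochhammer_rec')
    have e3: "pochhammer a (Suc (Suc M)) = a * ((a + 1 + real M) * X)"
      by (subst pochhammer_rec) (simp add: e2)
    have p1: "a + 1 + real M \<noteq> 0" "a \<noteq> 0" "X \<noteq> 0" using X Suc.prems by auto
    have gen: "F / (A * X) - F / (B * X) = F * (B - A) / (A * (B * X))" if "A \<noteq> 0" "B \<noteq> 0" "X \<noteq> 0" for F A B :: real
      using that by (simp add: field_simps)
    have "fact M / (a * X) - fact M / ((a + 1 + real M) * X) = fact M * (1 + real M) / (a * ((a + 1 + real M) * X))"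
      using gen[OF p1(2) p1(1) p1(3), of "fact M"] by simp
    then show ?thesis unfolding e1 e2 e3 by (simp add: algebra_simps)
  qed
  finally show ?case .
qed

definition ffr :: "real \<Rightarrow> nat \<Rightarrow> real" where
  "ffr e j = (\<Prod>l<j. e - real l)"

lemma ffr_Suc: "ffr e (Suc j) = ffr e j * (e - real j)"
  by (simp add: ffr_def)

lemma ffr_prod: "ffr (c + real n) n = (\<Prod>l\<in>{1..n}. c + real l)"
proof (induction n)
  case 0 then show ?case by (simp add: ffr_def)
next
  case (Suc n)
  have "ffr (c + real (Suc n)) (Suc n) = (c + real (Suc n)) * (\<Prod>l<n. c + real (Suc n) - real (Suc l))"
    unfolding ffr_def by (subst prod.lessThan_Suc_shift) simp
  also have "(\<Prod>l<n. c + real (Suc n) - real (Suc l)) = ffr (c + real n) n"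
    unfolding ffr_def by (intro prod.cong) auto
  finally show ?case using Suc.IH by (simp add: prod.nat_ivl_Suc')
qed

lemma deriv_funpow_local:
  assumes S: "open S" and base: "\<And>y. y \<in> S \<Longrightarrow> f y = g 0 y"
    and step: "\<And>j y. y \<in> S \<Longrightarrow> (g j has_real_derivative g (Suc j) y) (at y)"
  shows "y \<in> S \<Longrightarrow> (deriv ^^ j) f y = g j y"
proof (induction j arbitrary: y)
  case 0 then show ?case using base by simp
next
  case (Suc j)
  have "((deriv ^^ j) f has_real_derivative g (Suc j) y) (at y)"
    by (rule has_field_derivative_transform_within_open[OF step[OF Suc.prems] S Suc.prems])
       (use Suc.IH in auto)
  then show ?case by (simp add: DERIV_imp_deriv)
qed

lemma base_expand:
  fixes n :: nat and \<alpha> t :: real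
  assumes n2: "n \<ge> 2" and t1: "t < 1"
  shows "(1 - t) powr (real n + \<alpha>) * (1 + t) powi (int n + (-2))
     = (\<Sum>k\<le>n-2. real (n-2 choose k) * 2^(n-2-k) * (-1)^k * (1 - t) powr (real n + \<alpha> + real k))"
proof -
  have t: "1 - t > 0" using t1 by simp
  have i: "int n + (-2) = int (n - 2)" using n2 by simp
  have "(1 + t) powi (int n + (-2)) = (1 + t) ^ (n - 2)"
    unfolding i by (rule power_int_of_nat)
  also have "\<dots> = (-(1 - t) + 2) ^ (n - 2)" by simp
  also have "\<dots> = (\<Sum>k\<le>n-2. real (n-2 choose k) * (-(1-t))^k * 2^(n-2-k))"
    by (rule binomial_ring)
  finally have e: "(1 + t) powi (int n + (-2)) = (\<Sum>k\<le>n-2. real (n-2 choose k) * (-(1-t))^k * 2^(n-2-k))" .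
  show ?thesis
    unfolding e sum_distrib_left
  proof (rule sum.cong[OF refl])
    fix k
    have a: "(-(1-t))^k = (-1)^k * (1-t) powr (real k)"
      by (subst power_minus) (simp add: powr_realpow[OF t])
    have b: "(1 - t) powr (real n + \<alpha>) * (1-t) powr (real k) = (1-t) powr (real n + \<alpha> + real k)"
      by (rule powr_add[symmetric])
    show "(1 - t) powr (real n + \<alpha>) * (real (n-2 choose k) * (-(1-t))^k * 2^(n-2-k))
        = real (n-2 choose k) * 2^(n-2-k) * (-1)^k * (1 - t) powr (real n + \<alpha> + real k)"
      unfolding a b[symmetric] by (simp only: ac_simps)
  qed
qed

lemma jacobi_formula:
  fixes n :: nat and \<alpha> y :: real
  assumes n2: "n \<ge> 2" and y1: "y < 1"
  shows "jacobiP n \<alpha> (-2) y = (1 + y)^2 / (2^n * fact n) *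
     (\<Sum>i\<le>n-2. real (n-2 choose i) * 2^(n-2-i) * (-1)^i * ffr (real n + \<alpha> + real i) n * (1-y)^i)"
proof -
  define e where "e i = real n + \<alpha> + real i" for i
  define b where "b i = real (n-2 choose i) * 2^(n-2-i) * (-1)^i" for i :: nat
  define g where "g j y = (\<Sum>i\<le>n-2. b i * ((-1)^j * ffr (e i) j * (1-y) powr (e i - real j)))" for j y
  define F where "F t = (1 - t) powr (real n + \<alpha>) * (1 + t) powi (int n + (-2))" for t :: real
  have base: "F t = g 0 t" if "t \<in> {..<1}" for t
    unfolding F_def g_def b_def e_def using base_expand[OF n2, of t \<alpha>] that
    by (simp add: ffr_def)
  have step: "(g j has_real_derivative g (Suc j) t) (at t)" if "t \<in> {..<1}" for j t
  proof -
    have t: "1 - t > 0" using that by simp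
    have d1: "((\<lambda>y. (1 - y) powr c) has_real_derivative c * (1 - t) powr (c - 1) * (-1)) (at t)" for c
    proof -
      have "((\<lambda>y. 1 - y) has_real_derivative -1) (at t)"
        by (rule derivative_eq_intros refl)+ simp
      from DERIV_fun_powr[OF this t, of c] show ?thesis by simp
    qed
    have "(g j has_real_derivative
        (\<Sum>i\<le>n-2. b i * ((-1)^j * ffr (e i) j * ((e i - real j) * (1 - t) powr (e i - real j - 1) * (-1))))) (at t)"
      unfolding g_def
      by (intro DERIV_sum DERIV_cmult d1)
    moreover have "(\<Sum>i\<le>n-2. b i * ((-1)^j * ffr (e i) j * ((e i - real j) * (1 - t) powr (e i - real j - 1) * (-1))))
       = g (Suc j) t"
      unfolding g_def
    proof (intro sum.cong refl)
      fix i
      have ee: "e i - real j - 1 = e i - real (Suc j)" by simp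
      show "b i * ((-1)^j * ffr (e i) j * ((e i - real j) * (1 - t) powr (e i - real j - 1) * (-1)))
          = b i * ((-1)^(Suc j) * ffr (e i) (Suc j) * (1 - t) powr (e i - real (Suc j)))"
        unfolding ffr_Suc ee by simp
    qed
    ultimately show ?thesis by simp
  qed
  have D: "(deriv ^^ n) F y = g n y"
    by (rule deriv_funpow_local[of "{..<1}" F g]) (use base step y1 in auto)
  have y: "1 - y > 0" using y1 by simp
  have J: "jacobiP n \<alpha> (-2) y = (-1) ^ n / (2 ^ n * fact n) * (1 - y) powr (- \<alpha>) * (1 + y)^2 * g n y"
    unfolding jacobiP_def D[unfolded F_def] by simp
  have "(-1) ^ n * (1 - y) powr (- \<alpha>) * g n y =
       (\<Sum>i\<le>n-2. real (n-2 choose i) * 2^(n-2-i) * (-1)^i * ffr (real n + \<alpha> + real i) n * (1-y)^i)"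
    unfolding g_def sum_distrib_left
  proof (rule sum.cong[OF refl])
    fix i
    have p: "(1 - y) powr (- \<alpha>) * (1 - y) powr (e i - real n) = (1 - y) ^ i"
    proof -
      have "(1 - y) powr (- \<alpha>) * (1 - y) powr (e i - real n) = (1 - y) powr (- \<alpha> + (e i - real n))"
        by (rule powr_add[symmetric])
      also have "- \<alpha> + (e i - real n) = real i" by (simp add: e_def)
      finally show ?thesis using y by (simp add: powr_realpow)
    qed
    have m: "(-1::real)^n * (-1)^n = 1" by (simp add: power_mult_distrib[symmetric])
    have "(-1) ^ n * (1 - y) powr (- \<alpha>) * (b i * ((-1) ^ n * ffr (e i) n * (1 - y) powr (e i - real n)))
        = ((-1)^n * (-1)^n) * b i * ffr (e i) n * ((1 - y) powr (- \<alpha>) * (1 - y) powr (e i - real n))"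
      by (simp only: ac_simps)
    also have "\<dots> = b i * ffr (e i) n * (1 - y) ^ i" unfolding m p by simp
    finally show "(-1) ^ n * (1 - y) powr (- \<alpha>) * (b i * ((-1) ^ n * ffr (e i) n * (1 - y) powr (e i - real n))) =
         real (n-2 choose i) * 2^(n-2-i) * (-1)^i * ffr (real n + \<alpha> + real i) n * (1-y)^i"
      by (simp add: b_def e_def)
  qed
  then show ?thesis unfolding J by (simp add: mult.assoc mult.left_commute)
qed

definition sC :: "nat \<Rightarrow> real \<Rightarrow> nat \<Rightarrow> real" where
  "sC m \<alpha> i = (-1)^i * real (m-1 choose i) * (\<Prod>l\<in>{1..m+1}. \<alpha> + real i + real l)"

definition Kc :: "nat \<Rightarrow> real \<Rightarrow> real" where
  "Kc m \<alpha> = Gamma (\<alpha> + real m) / (pi powr \<alpha> * Gamma (real m)) / fact (m+1)"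

definition Hp :: "nat \<Rightarrow> real \<Rightarrow> real poly" where
  "Hp m \<alpha> = smult (Kc m \<alpha>) (\<Sum>i<m. smult (sC m \<alpha> i)
      (monom 1 (2*i) - smult 2 (monom 1 (2*i+2)) + monom 1 (2*i+4)))"

lemma poly_Hp: "poly (Hp m \<alpha>) x = Kc m \<alpha> * ((1 - x\<^sup>2)\<^sup>2 * (\<Sum>i<m. sC m \<alpha> i * x^(2*i)))"
proof -
  have E: "(1 - x\<^sup>2)\<^sup>2 * x^(2*i) = x^(2*i) - 2 * x^(2*i+2) + x^(2*i+4)" for i
  proof -
    have a: "x^(2*i+2) = x^(2*i) * x^2" by (rule power_add)
    have b: "x^(2*i+4) = x^(2*i) * (x^2)^2" by (simp add: power_add power_mult[symmetric])
    have c: "(1 - Y)\<^sup>2 * X = X - 2 * (X * Y) + X * Y^2" for X Y :: real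
      by (simp add: power2_eq_square algebra_simps)
    show ?thesis unfolding a b c ..
  qed
  have "poly (Hp m \<alpha>) x = Kc m \<alpha> * (\<Sum>i<m. sC m \<alpha> i * (x^(2*i) - 2 * x^(2*i+2) + x^(2*i+4)))"
    by (simp add: Hp_def poly_sum poly_monom)
  also have "\<dots> = Kc m \<alpha> * (\<Sum>i<m. sC m \<alpha> i * ((1 - x\<^sup>2)\<^sup>2 * x^(2*i)))"
    by (simp only: E)
  also have "\<dots> = Kc m \<alpha> * ((1 - x\<^sup>2)\<^sup>2 * (\<Sum>i<m. sC m \<alpha> i * x^(2*i)))"
    by (simp add: sum_distrib_left ac_simps)
  finally show ?thesis .
qed

lemma GB_eq:
  assumes q: "q = 2 * m" and m1: "m \<ge> 1" and x0: "0 < x" and x1: "x \<le> 1"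
  shows "GB d q x = poly (Hp m (real d / 2)) x"
proof -
  define \<alpha> where "\<alpha> = real d / 2"
  define y where "y = 1 - 2 * x\<^sup>2"
  have y1: "y < 1" using x0 by (simp add: y_def)
  have g1: "(real d + real q) / 2 = \<alpha> + real m" using q by (simp add: \<alpha>_def field_simps)
  have g2: "real q / 2 = real m" using q by simp
  have g3: "q div 2 + 1 = Suc m" using q by simp
  have J: "jacobiP (Suc m) \<alpha> (-2) y = (1 + y)^2 / (2^(Suc m) * fact (Suc m)) *
     (\<Sum>i\<le>Suc m-2. real (Suc m-2 choose i) * 2^(Suc m-2-i) * (-1)^i * ffr (real (Suc m) + \<alpha> + real i) (Suc m) * (1-y)^i)"
    by (rule jacobi_formula) (use m1 y1 in auto)
  have sm: "Suc m - 2 = m - 1" by simp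
  have S: "(\<Sum>i\<le>m-1. real (m-1 choose i) * 2^(m-1-i) * (-1)^i * ffr (real (Suc m) + \<alpha> + real i) (Suc m) * (1-y)^i)
      = 2^(m-1) * (\<Sum>i<m. sC m \<alpha> i * x^(2*i))"
  proof -
    have iv: "{..m-1} = {..<m}" using m1 by auto
    show ?thesis unfolding iv sum_distrib_left
    proof (rule sum.cong[OF refl])
      fix i assume "i \<in> {..<m}"
      then have im: "i \<le> m - 1" by simp
      have f: "ffr (real (Suc m) + \<alpha> + real i) (Suc m) = (\<Prod>l\<in>{1..m+1}. \<alpha> + real i + real l)"
        using ffr_prod[of "\<alpha> + real i" "Suc m"] by (simp add: ac_simps)
      have p: "(2::real)^(m-1-i) * (1 - y)^i = 2^(m-1) * x^(2*i)"
      proof -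
        have "(1 - y)^i = 2^i * x^(2*i)" by (simp add: y_def power_mult_distrib power_mult)
        moreover have "(2::real)^(m-1-i) * 2^i = 2^(m-1)"
          using im by (simp add: power_add[symmetric])
        ultimately show ?thesis by (simp add: mult.assoc[symmetric])
      qed
      show "real (m-1 choose i) * 2^(m-1-i) * (-1)^i * ffr (real (Suc m) + \<alpha> + real i) (Suc m) * (1-y)^i
          = 2^(m-1) * (sC m \<alpha> i * x^(2*i))"
        unfolding sC_def f
      proof -
        let ?C = "real (m-1 choose i)" and ?s = "(-1::real)^i" and ?P = "(\<Prod>l\<in>{1..m+1}. \<alpha> + real i + real l)"
        have "?C * 2^(m-1-i) * ?s * ?P * (1-y)^i = (?C * ?s * ?P) * (2^(m-1-i) * (1-y)^i)"
          by (simp only: ac_simps)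
        also have "\<dots> = (?C * ?s * ?P) * (2^(m-1) * x^(2*i))" by (simp only: p)
        also have "\<dots> = 2^(m-1) * (?s * ?C * ?P * x^(2*i))" by (simp only: ac_simps)
        finally show "?C * 2^(m-1-i) * ?s * ?P * (1-y)^i = 2^(m-1) * (?s * ?C * ?P * x^(2*i))" .
      qed
    qed
  qed
  have c: "(1 + y)^2 / (2^(Suc m) * fact (Suc m)) * 2^(m-1) = (1 - x\<^sup>2)\<^sup>2 / fact (Suc m)"
  proof -
    have h1: "(1 + y)^2 = 4 * (1 - x\<^sup>2)\<^sup>2" by (simp add: y_def power2_eq_square algebra_simps)
    have h2: "(2::real)^(Suc m) = 4 * 2^(m-1)"
    proof -
      have "Suc m = (m - 1) + 2" using m1 by simp
      then show ?thesis by (metis power_add power2_eq_square mult.commute numeral_Bit0 mult_2 one_add_one)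
    qed
    have gen: "(4*A)/((4*T)*F)*T = A/F" if "T > 0" "F > 0" for A T F :: real
      using that by (simp add: field_simps)
    show ?thesis unfolding h1 h2 by (rule gen) auto
  qed
  have "GB d q x = Gamma (\<alpha> + real m) / (pi powr \<alpha> * Gamma (real m)) * jacobiP (Suc m) \<alpha> (-2) y"
    unfolding GB_def if_P[OF x1] g1 g2 g3 by (simp only: \<alpha>_def y_def)
  also have "\<dots> = Gamma (\<alpha> + real m) / (pi powr \<alpha> * Gamma (real m)) *
      ((1 + y)^2 / (2^(Suc m) * fact (Suc m)) * 2^(m-1)) * (\<Sum>i<m. sC m \<alpha> i * x^(2*i))"
    unfolding J sm S by (simp only: ac_simps)
  also have "\<dots> = poly (Hp m \<alpha>) x"
    unfolding c poly_Hp Kc_def by simp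
  finally show ?thesis by (simp add: \<alpha>_def)
qed

lemma poly_Hp': "poly (Hp m \<alpha>) = (\<lambda>x. Kc m \<alpha> * (\<Sum>i<m. sC m \<alpha> i * (x^(2*i) - 2 * x^(2*i+2) + x^(2*i+4))))"
  by (rule ext) (simp add: Hp_def poly_sum poly_monom)

lemma poly_p0:
  "poly (pderiv (Hp m \<alpha>)) x = Kc m \<alpha> * (\<Sum>i<m. sC m \<alpha> i *
     (real (2*i) * x^(2*i-1) - 2 * (real (2*i+2) * x^(2*i+1)) + real (2*i+4) * x^(2*i+3)))"
proof -
  have "(poly (Hp m \<alpha>) has_real_derivative Kc m \<alpha> * (\<Sum>i<m. sC m \<alpha> i *
     (real (2*i) * x^(2*i - Suc 0) - 2 * (real (2*i+2) * x^(2*i+2 - Suc 0)) + real (2*i+4) * x^(2*i+4 - Suc 0)))) (at x)"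
    unfolding poly_Hp'
    by (intro DERIV_cmult DERIV_sum DERIV_add DERIV_diff DERIV_pow)
  moreover have "(2::nat)*i+2 - Suc 0 = 2*i+1" "(2::nat)*i+4 - Suc 0 = 2*i+3" for i by auto
  ultimately have "(poly (Hp m \<alpha>) has_real_derivative Kc m \<alpha> * (\<Sum>i<m. sC m \<alpha> i *
     (real (2*i) * x^(2*i-1) - 2 * (real (2*i+2) * x^(2*i+1)) + real (2*i+4) * x^(2*i+3)))) (at x)"
    by simp
  from DERIV_unique[OF poly_DERIV this] show ?thesis .
qed

lemma mom_p0:
  assumes r: "r \<ge> 1"
  shows "((\<lambda>x. x^r * pbar (pderiv (Hp m \<alpha>)) x) has_integral
     Kc m \<alpha> * (\<Sum>i<m. sC m \<alpha> i * (real (2*i) / (real r + 2 * real i)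
        - 2 * (real (2*i+2) / (real r + 2 * real i + 2)) + real (2*i+4) / (real r + 2 * real i + 4)))) {0..}"
proof (rule pbar_int)
  have e: "x^r * poly (pderiv (Hp m \<alpha>)) x = Kc m \<alpha> * (\<Sum>i<m. sC m \<alpha> i *
     (real (2*i) * x^(r+2*i-1) - 2 * (real (2*i+2) * x^(r+2*i+1)) + real (2*i+4) * x^(r+2*i+3)))" for x :: real
  proof -
    have a: "x^r * (real (2*i) * x^(2*i-1)) = real (2*i) * x^(r+2*i-1)" for i
    proof (cases i)
      case 0 then show ?thesis by simp
    next
      case (Suc j)
      then have "r + 2*i - 1 = r + (2*i-1)" by simp
      then show ?thesis by (simp add: power_add)
    qed
    have a2: "x^r * (B * x^k) = B * x^(r+k)" for B :: real and k
      by (simp add: power_add ac_simps)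
    have G: "x^r * (K * (s * (P1 - 2 * P2 + P3))) = K * (s * (x^r * P1 - 2 * (x^r * P2) + x^r * P3))"
      for K s P1 P2 P3 :: real
      by (simp add: algebra_simps)
    have n1: "r + (2*i+1) = r+2*i+1" "r + (2*i+3) = r+2*i+3" for i :: nat by auto
    show ?thesis unfolding poly_p0 sum_distrib_left G a
      by (simp only: a2 n1)
  qed
  have i1: "((\<lambda>x. x^(r+2*i-1)) has_integral 1 / (real r + 2 * real i)) {0..1}" for i
  proof -
    have "real (r+2*i-1) + 1 = real r + 2 * real i" using r by (simp add: of_nat_diff)
    then show ?thesis using mono_int[of "r+2*i-1"] by metis
  qed
  have i2: "((\<lambda>x. x^(r+2*i+1)) has_integral 1 / (real r + 2 * real i + 2)) {0..1}" for i
  proof -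
    have eq: "real (r+2*i+1) + 1 = real r + 2 * real i + 2" by simp
    show ?thesis using mono_int[of "r+2*i+1", unfolded eq] .
  qed
  have i3: "((\<lambda>x. x^(r+2*i+3)) has_integral 1 / (real r + 2 * real i + 4)) {0..1}" for i
  proof -
    have eq: "real (r+2*i+3) + 1 = real r + 2 * real i + 4" by simp
    show ?thesis using mono_int[of "r+2*i+3", unfolded eq] .
  qed
  show "((\<lambda>x. x^r * poly (pderiv (Hp m \<alpha>)) x) has_integral
     Kc m \<alpha> * (\<Sum>i<m. sC m \<alpha> i * (real (2*i) / (real r + 2 * real i)
        - 2 * (real (2*i+2) / (real r + 2 * real i + 2)) + real (2*i+4) / (real r + 2 * real i + 4)))) {0..1}"
  proof -
    have "((\<lambda>x. x^r * poly (pderiv (Hp m \<alpha>)) x) has_integral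
      Kc m \<alpha> * (\<Sum>i<m. sC m \<alpha> i * (real (2*i) * (1 / (real r + 2 * real i))
        - 2 * (real (2*i+2) * (1 / (real r + 2 * real i + 2))) + real (2*i+4) * (1 / (real r + 2 * real i + 4))))) {0..1}"
      unfolding e
      by (intro has_integral_mult_right has_integral_sum finite_lessThan has_integral_add has_integral_diff i1 i2 i3)
    then show ?thesis by simp
  qed
qed

definition Tk :: "nat \<Rightarrow> real \<Rightarrow> nat \<Rightarrow> real" where
  "Tk m \<alpha> k = (\<Sum>i<m. sC m \<alpha> i / ((\<alpha> + real k + real i) * (\<alpha> + real k + real i + 1) * (\<alpha> + real k + real i + 2)))"

lemma term_id:
  fixes t :: real
  assumes "t > 0"
  shows "real (2*i) / (2 * t + 2 * real i) - 2 * (real (2*i+2) / (2 * t + 2 * real i + 2))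
         + real (2*i+4) / (2 * t + 2 * real i + 4)
       = - (2 * t) / ((t + real i) * (t + real i + 1) * (t + real i + 2))"
proof -
  define u where "u = t + real i"
  define j where "j = real i"
  have u: "u > 0" using assms by (simp add: u_def)
  have nz: "u \<noteq> 0" "u + 1 \<noteq> 0" "u + 2 \<noteq> 0" "1 + u \<noteq> 0" "2 + u \<noteq> 0" using u by linarith+
  have e1: "real (2*i) / (2 * t + 2 * real i) = j / u"
  proof -
    have "real (2*i) = 2 * j" "2 * t + 2 * real i = 2 * u" by (simp_all add: u_def j_def)
    then show ?thesis by simp
  qed
  have e2: "2 * (real (2*i+2) / (2 * t + 2 * real i + 2)) = 2 * (j + 1) / (u + 1)"
  proof -
    have q: "real (2*i+2) = 2 * (j + 1)" "2 * t + 2 * real i + 2 = 2 * (u + 1)" by (simp_all add: u_def j_def)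
    show ?thesis unfolding q using nz by (simp add: field_simps)
  qed
  have e3: "real (2*i+4) / (2 * t + 2 * real i + 4) = (j + 2) / (u + 2)"
  proof -
    have q: "real (2*i+4) = 2 * (j + 2)" "2 * t + 2 * real i + 4 = 2 * (u + 2)" by (simp_all add: u_def j_def)
    show ?thesis unfolding q using nz by (simp add: field_simps)
  qed
  have main0: "j / u - 2 * (j + 1) / v + (j + 2) / w = 2 * (j - u) / (u * v * w)"
    if "u \<noteq> 0" "v \<noteq> 0" "w \<noteq> 0" "v = u + 1" "w = u + 2" for v w
  proof -
    have "j / u - 2 * (j + 1) / v + (j + 2) / w = (j * v * w - 2 * (j + 1) * u * w + (j + 2) * u * v) / (u * v * w)"
      using that(1-3) by (simp add: field_simps)
    also have "j * v * w - 2 * (j + 1) * u * w + (j + 2) * u * v = 2 * (j - u)"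
      unfolding that(4,5) by (simp add: algebra_simps)
    finally show ?thesis .
  qed
  have main: "j / u - 2 * (j + 1) / (u + 1) + (j + 2) / (u + 2) = 2 * (j - u) / (u * (u + 1) * (u + 2))"
    by (rule main0) (use nz in auto)
  have r: "- (2 * t) / ((t + real i) * (t + real i + 1) * (t + real i + 2)) = 2 * (j - u) / (u * (u + 1) * (u + 2))"
    by (simp add: u_def j_def)
  show ?thesis unfolding e1 e2 e3 r by (rule main)
qed

lemma Tk_zero:
  assumes a0: "\<alpha> > 0" and k1: "1 \<le> k" and km: "k \<le> m - 1"
  shows "Tk m \<alpha> k = 0"
proof -
  define A where "A = {1..m+1}"
  define B where "B = {k, k+1, k+2}"
  have m2: "m \<ge> 2" using k1 km by simp
  have BA: "B \<subseteq> A" using k1 km m2 by (auto simp: A_def B_def)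
  define Q where "Q = (\<Prod>l\<in>A-B. [:\<alpha> + real l, 1:])"
  have cardAB: "card (A - B) = m - 2"
  proof -
    have "card B = 3" by (simp add: B_def)
    then show ?thesis using BA by (simp add: card_Diff_subset A_def finite_subset)
  qed
  have degQ: "degree Q < m - 1"
  proof -
    have "degree Q = (\<Sum>l\<in>A-B. degree [:\<alpha> + real l, 1:])"
      unfolding Q_def by (rule degree_prod_eq_sum_degree) auto
    also have "\<dots> = m - 2" using cardAB by simp
    finally show ?thesis using m2 by simp
  qed
  have trm: "sC m \<alpha> i / ((\<alpha> + real k + real i) * (\<alpha> + real k + real i + 1) * (\<alpha> + real k + real i + 2))
        = (-1)^i * real (m - 1 choose i) * poly Q (real i)" for i
  proof -
    define f where "f l = \<alpha> + real i + real l" for l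
    have pA: "(\<Prod>l\<in>A. f l) = (\<Prod>l\<in>A-B. f l) * (\<Prod>l\<in>B. f l)"
      by (rule prod.subset_diff[OF BA]) (simp add: A_def)
    have pB: "(\<Prod>l\<in>B. f l) = (\<alpha> + real k + real i) * (\<alpha> + real k + real i + 1) * (\<alpha> + real k + real i + 2)"
      by (simp add: B_def f_def algebra_simps)
    have nz: "(\<alpha> + real k + real i) * (\<alpha> + real k + real i + 1) * (\<alpha> + real k + real i + 2) \<noteq> 0"
      using a0 by (simp add: add_pos_nonneg)
    have pQ: "poly Q (real i) = (\<Prod>l\<in>A-B. f l)"
      unfolding Q_def poly_prod f_def by (intro prod.cong) simp_all
    have "sC m \<alpha> i = (-1)^i * real (m - 1 choose i) * ((\<Prod>l\<in>A-B. f l) *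
          ((\<alpha> + real k + real i) * (\<alpha> + real k + real i + 1) * (\<alpha> + real k + real i + 2)))"
      unfolding sC_def A_def[symmetric] f_def[symmetric] pA pB ..
    then show ?thesis using nz unfolding pQ by simp
  qed
  have iv: "{..<m} = {..m-1}" using m2 by auto
  have "Tk m \<alpha> k = (\<Sum>i\<le>m-1. (-1)^i * real (m - 1 choose i) * poly Q (real i))"
    unfolding Tk_def trm iv ..
  also have "\<dots> = 0" by (rule alt_poly[OF degQ])
  finally show ?thesis .
qed

lemma T_zero:
  assumes a0: "\<alpha> > 0" and m1: "m \<ge> 1"
  shows "Tk m \<alpha> 0 = fact (m+1) / 2 * (fact (m-1) / pochhammer \<alpha> m)"
proof -
  define A where "A = {1..m+1}"
  define B where "B = {1::nat, 2}"
  have BA: "B \<subseteq> A" using m1 by (auto simp: A_def B_def)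
  have AB: "A - B = {3..m+1}" by (auto simp: A_def B_def)
  define Q where "Q = (\<Prod>l\<in>{3..m+1}. [:real l, 1:])"
  obtain c h where Qch: "Q = pCons c h" by (cases Q) auto
  have polyQ: "poly Q t = (\<Prod>l\<in>{3..m+1}. real l + t)" for t
    unfolding Q_def poly_prod by (intro prod.cong) simp_all
  have polyQ': "poly Q t = c + t * poly h t" for t by (simp add: Qch)
  have c: "c = (\<Prod>l\<in>{3..m+1}. real l)" using polyQ'[of 0] polyQ[of 0] by simp
  have degQ: "degree Q = m - 1"
  proof -
    have "degree Q = (\<Sum>l\<in>{3..m+1}. degree [:real l, 1:])"
      unfolding Q_def by (rule degree_prod_eq_sum_degree) auto
    also have "\<dots> = m - 1" by simp
    finally show ?thesis .
  qed
  have cfact: "c = fact (m+1) / 2"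
  proof -
    have "(\<Prod>l\<in>A. real l) = (\<Prod>l\<in>A-B. real l) * (\<Prod>l\<in>B. real l)"
      by (rule prod.subset_diff[OF BA]) (simp add: A_def)
    also have "(\<Prod>l\<in>B. real l) = 2" by (simp add: B_def)
    finally have "(\<Prod>l\<in>A. real l) = c * 2" unfolding AB c .
    moreover have "fact (m+1) = (\<Prod>l\<in>A. real l)"
      unfolding A_def fact_prod by (simp add: algebra_simps)
    ultimately show ?thesis by simp
  qed
  have trm: "sC m \<alpha> i / ((\<alpha> + real 0 + real i) * (\<alpha> + real 0 + real i + 1) * (\<alpha> + real 0 + real i + 2))
        = c * ((-1)^i * real (m - 1 choose i) * (1 / (\<alpha> + real i)))
          + (-1)^i * real (m - 1 choose i) * poly (pcompose h [:\<alpha>, 1:]) (real i)" for i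
  proof -
    define f where "f l = \<alpha> + real i + real l" for l
    have pA: "(\<Prod>l\<in>A. f l) = (\<Prod>l\<in>A-B. f l) * (\<Prod>l\<in>B. f l)"
      by (rule prod.subset_diff[OF BA]) (simp add: A_def)
    have pB: "(\<Prod>l\<in>B. f l) = (\<alpha> + real i + 1) * (\<alpha> + real i + 2)"
      by (simp add: B_def f_def)
    have pAB: "(\<Prod>l\<in>A-B. f l) = c + (\<alpha> + real i) * poly h (\<alpha> + real i)"
      unfolding AB polyQ'[symmetric] polyQ f_def by (simp add: ac_simps)
    have nz: "\<alpha> + real i > 0" using a0 by simp
    have sCe: "sC m \<alpha> i = (-1)^i * real (m - 1 choose i) * ((c + (\<alpha> + real i) * poly h (\<alpha> + real i)) *
          ((\<alpha> + real i + 1) * (\<alpha> + real i + 2)))"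
      unfolding sC_def A_def[symmetric] f_def[symmetric] pA pB pAB ..
    have gen0: "S * ((c + a * P) * (v * w)) / (a * v * w) = c * (S * (1 / a)) + S * P"
      if "a \<noteq> 0" "v \<noteq> 0" "w \<noteq> 0" for a S P v w :: real
      using that by (simp add: field_simps)
    have gen: "S * ((c + a * P) * ((a + 1) * (a + 2))) / (a * (a + 1) * (a + 2)) = c * (S * (1 / a)) + S * P"
      if "a > 0" for a S P :: real
      by (rule gen0) (use that in auto)
    have pc: "poly (pcompose h [:\<alpha>, 1:]) (real i) = poly h (\<alpha> + real i)"
      by (simp add: poly_pcompose)
    have L: "\<alpha> + real 0 + real i = \<alpha> + real i" by simp
    show ?thesis unfolding L sCe gen[OF nz] pc ..
  qed
  have iv: "{..<m} = {..m-1}" using m1 by auto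
  have "Tk m \<alpha> 0 = c * (\<Sum>i\<le>m-1. (-1)^i * real (m - 1 choose i) * (1 / (\<alpha> + real i)))
        + (\<Sum>i\<le>m-1. (-1)^i * real (m - 1 choose i) * poly (pcompose h [:\<alpha>, 1:]) (real i))"
    unfolding Tk_def trm iv by (simp add: sum.distrib sum_distrib_left)
  also have "(\<Sum>i\<le>m-1. (-1)^i * real (m - 1 choose i) * (1 / (\<alpha> + real i))) = fact (m-1) / pochhammer \<alpha> m"
    using alt_recip[OF a0, of "m-1"] m1 by simp
  also have "(\<Sum>i\<le>m-1. (-1)^i * real (m - 1 choose i) * poly (pcompose h [:\<alpha>, 1:]) (real i)) = 0"
  proof (cases "h = 0")
    case True then show ?thesis by simp
  next
    case False
    then have "degree Q = Suc (degree h)" by (simp add: Qch)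
    then have "degree (pcompose h [:\<alpha>, 1:]) < m - 1" using degQ by (simp add: degree_pcompose)
    then show ?thesis by (rule alt_poly)
  qed
  finally show ?thesis by (simp add: cfact)
qed

lemma mom_p0_closed:
  assumes d1: "d \<ge> 1"
  shows "((\<lambda>x. x^(d+2*k) * pbar (pderiv (Hp m (real d / 2))) x) has_integral
          - Kc m (real d / 2) * real (d + 2*k) * Tk m (real d / 2) k) {0..}"
proof -
  define \<alpha> where "\<alpha> = real d / 2"
  define t where "t = \<alpha> + real k"
  have t0: "t > 0" using d1 by (simp add: t_def \<alpha>_def)
  have r: "real (d + 2*k) = 2 * t" by (simp add: t_def \<alpha>_def)
  have e: "sC m \<alpha> i * (real (2*i) / (real (d + 2*k) + 2 * real i)
        - 2 * (real (2*i+2) / (real (d + 2*k) + 2 * real i + 2)) + real (2*i+4) / (real (d + 2*k) + 2 * real i + 4))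
      = - real (d + 2*k) * (sC m \<alpha> i / ((\<alpha> + real k + real i) * (\<alpha> + real k + real i + 1) * (\<alpha> + real k + real i + 2)))" for i
    unfolding r term_id[OF t0] by (simp add: t_def)
  have "((\<lambda>x. x^(d+2*k) * pbar (pderiv (Hp m \<alpha>)) x) has_integral
     Kc m \<alpha> * (\<Sum>i<m. sC m \<alpha> i * (real (2*i) / (real (d + 2*k) + 2 * real i)
        - 2 * (real (2*i+2) / (real (d + 2*k) + 2 * real i + 2)) + real (2*i+4) / (real (d + 2*k) + 2 * real i + 4)))) {0..}"
    by (rule mom_p0) (use d1 in simp)
  also have "Kc m \<alpha> * (\<Sum>i<m. sC m \<alpha> i * (real (2*i) / (real (d + 2*k) + 2 * real i)
        - 2 * (real (2*i+2) / (real (d + 2*k) + 2 * real i + 2)) + real (2*i+4) / (real (d + 2*k) + 2 * real i + 4)))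
      = - Kc m \<alpha> * real (d + 2*k) * Tk m \<alpha> k"
    unfolding e Tk_def sum_distrib_left by (intro sum.cong refl) (simp add: algebra_simps)
  finally show ?thesis by (simp add: \<alpha>_def)
qed

lemma bsph_pos: "d \<ge> 1 \<Longrightarrow> bsph d > 0"
  by (simp add: bsph_def)

lemma M0_value:
  assumes d1: "d \<ge> 1" and m1: "m \<ge> 1"
  shows "- Kc m (real d / 2) * real (d + 2*0) * Tk m (real d / 2) 0 = - real d / bsph d"
proof -
  define \<alpha> where "\<alpha> = real d / 2"
  have a0: "\<alpha> > 0" using d1 by (simp add: \<alpha>_def)
  have nI: "\<alpha> \<notin> \<int>\<^sub>\<le>\<^sub>0" using a0 nonpos_Ints_nonpos by fastforce
  have poch: "pochhammer \<alpha> m = Gamma (\<alpha> + real m) / Gamma \<alpha>"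
    using pochhammer_Gamma[OF nI, of m] by simp
  have gm: "Gamma (real m) = fact (m - 1)"
  proof -
    obtain m' where m': "m = Suc m'" using m1 by (cases m) auto
    have "Gamma (1 + of_nat m') = (fact m' :: real)" by (rule Gamma_fact)
    then show ?thesis unfolding m' by simp
  qed
  have G1: "Gamma (\<alpha> + real m) > 0" using a0 by simp
  have G2: "Gamma \<alpha> > 0" using a0 by simp
  have pp: "pi powr \<alpha> > 0" by simp
  have "Kc m \<alpha> * Tk m \<alpha> 0 = Gamma \<alpha> / (2 * pi powr \<alpha>)"
  proof -
    have gen: "G / (P * F2) / F1 * (F1 / 2 * (F2 / (G / Ga))) = Ga / (2 * P)"
      if "G > 0" "Ga > 0" "P > 0" "F1 > 0" "F2 > 0" for G Ga P F1 F2 :: real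
      using that by (simp add: field_simps)
    show ?thesis unfolding T_zero[OF a0 m1] Kc_def poch gm
      by (rule gen) (use G1 G2 pp in auto)
  qed
  then show ?thesis
    unfolding bsph_def \<alpha>_def[symmetric]
    using G2 pp by (simp add: field_simps \<alpha>_def)
qed

lemma poly_odd:
  fixes p :: "real poly"
  assumes cc: "\<forall>k. coeff p k \<noteq> 0 \<longrightarrow> odd k \<and> k \<le> 2*m+1"
  shows "poly p x = (\<Sum>j\<le>m. coeff p (2*j+1) * x^(2*j+1))"
proof -
  have dg: "degree p \<le> 2*m+1"
    by (rule degree_le) (use cc in force)
  have "poly p x = (\<Sum>k\<le>degree p. coeff p k * x^k)" by (rule poly_altdef)
  also have "\<dots> = (\<Sum>k\<le>2*m+1. coeff p k * x^k)"
    by (rule sum.mono_neutral_left) (use dg in \<open>auto simp: coeff_eq_0\<close>)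
  also have "\<dots> = (\<Sum>k\<in>(\<lambda>j. 2*j+1) ` {..m}. coeff p k * x^k)"
  proof (rule sum.mono_neutral_right)
    show "(\<lambda>j. 2*j+1) ` {..m} \<subseteq> {..2*m+1}" by auto
    show "\<forall>k\<in>{..2*m+1} - (\<lambda>j. 2*j+1) ` {..m}. coeff p k * x^k = 0"
    proof
      fix k assume k: "k \<in> {..2*m+1} - (\<lambda>j. 2*j+1) ` {..m}"
      show "coeff p k * x^k = 0"
      proof (rule ccontr)
        assume "coeff p k * x^k \<noteq> 0"
        then have "odd k" "k \<le> 2*m+1" using cc by auto
        then have "k = 2 * ((k - 1) div 2) + 1" "(k - 1) div 2 \<le> m" by presburger+
        then have "k \<in> (\<lambda>j. 2*j+1) ` {..m}" by (metis atMost_iff image_eqI)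
        with k show False by auto
      qed
    qed
  qed simp
  also have "\<dots> = (\<Sum>j\<le>m. coeff p (2*j+1) * x^(2*j+1))"
    by (subst sum.reindex) (auto simp: inj_on_def)
  finally show ?thesis .
qed

lemma mom_general:
  fixes p :: "real poly"
  assumes cc: "\<forall>k. coeff p k \<noteq> 0 \<longrightarrow> odd k \<and> k \<le> 2*m+1"
  shows "((\<lambda>x. x^r * pbar p x) has_integral (\<Sum>j\<le>m. coeff p (2*j+1) / (real r + 2 * real j + 2))) {0..}"
proof (rule pbar_int)
  have e: "x^r * poly p x = (\<Sum>j\<le>m. coeff p (2*j+1) * x^(r+2*j+1))" for x :: real
    unfolding poly_odd[OF cc] sum_distrib_left
    by (intro sum.cong refl) (simp add: power_add ac_simps)
  have i: "((\<lambda>x. x^(r+2*j+1)) has_integral 1 / (real r + 2 * real j + 2)) {0..1}" for j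
  proof -
    have eq: "real (r+2*j+1) + 1 = real r + 2 * real j + 2" by simp
    show ?thesis using mono_int[of "r+2*j+1", unfolded eq] .
  qed
  have "((\<lambda>x. x^r * poly p x) has_integral (\<Sum>j\<le>m. coeff p (2*j+1) * (1 / (real r + 2 * real j + 2)))) {0..1}"
    unfolding e by (intro has_integral_sum finite_atMost has_integral_mult_right i)
  then show "((\<lambda>x. x^r * poly p x) has_integral (\<Sum>j\<le>m. coeff p (2*j+1) / (real r + 2 * real j + 2))) {0..1}"
    by simp
qed

lemma coeff_p0:
  "\<forall>k. coeff (pderiv (Hp m \<alpha>)) k \<noteq> 0 \<longrightarrow> odd k \<and> k \<le> 2*m+1"
proof (intro allI impI)
  fix k assume nz: "coeff (pderiv (Hp m \<alpha>)) k \<noteq> 0"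
  show "odd k \<and> k \<le> 2*m+1"
  proof (rule ccontr)
    assume nk: "\<not> (odd k \<and> k \<le> 2*m+1)"
    have ne: "2*i \<noteq> Suc k \<and> 2*i+2 \<noteq> Suc k \<and> 2*i+4 \<noteq> Suc k" if "i < m" for i
      using nk that by presburger
    have "coeff (Hp m \<alpha>) (Suc k) = Kc m \<alpha> * (\<Sum>i<m. sC m \<alpha> i *
        ((if 2*i = Suc k then 1 else 0) - 2 * (if 2*i+2 = Suc k then 1 else 0) + (if 2*i+4 = Suc k then 1 else 0)))"
      unfolding Hp_def by (simp add: coeff_sum coeff_monom)
    also have "\<dots> = 0" using ne by (simp del: One_nat_def)
    finally have "coeff (pderiv (Hp m \<alpha>)) k = 0" by (simp add: coeff_pderiv)
    with nz show False by simp
  qed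
qed

lemma p0_at1: "poly (pderiv (Hp m \<alpha>)) 1 = 0"
  unfolding poly_p0 by (simp add: algebra_simps)

lemma Hp_at1: "poly (Hp m \<alpha>) 1 = 0"
  unfolding poly_Hp by simp

lemma GB_deriv:
  assumes q: "q = 2 * m" and m1: "m \<ge> 1" and x0: "x > 0"
  shows "(GB d q has_real_derivative pbar (pderiv (Hp m (real d / 2))) x) (at x)"
proof -
  define H where "H = Hp m (real d / 2)"
  have GBH: "GB d q y = poly H y" if "0 < y" "y \<le> 1" for y
    unfolding H_def by (rule GB_eq[OF q m1 that])
  have GB0: "GB d q y = 0" if "y > 1" for y
    using that by (simp add: GB_def)
  consider "x < 1" | "x > 1" | "x = 1" by linarith
  then show ?thesis
  proof cases
    case 1
    have "(GB d q has_real_derivative poly (pderiv H) x) (at x)"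
      by (rule has_field_derivative_transform_within_open[OF poly_DERIV, of "{0<..<1}"])
         (use 1 x0 GBH in auto)
    then show ?thesis using 1 by (simp add: pbar_def H_def)
  next
    case 2
    have "((\<lambda>_. 0) has_real_derivative 0) (at x)" by simp
    then have "(GB d q has_real_derivative 0) (at x)"
      by (rule has_field_derivative_transform_within_open[of _ _ _ "{1<..}"])
         (use 2 GB0 in auto)
    then show ?thesis using 2 by (simp add: pbar_def)
  next
    case 3
    have pb: "pbar (pderiv H) 1 = 0" by (simp add: pbar_def H_def p0_at1)
    have G1: "GB d q 1 = 0" using GBH[of 1] Hp_at1 by (simp add: H_def)
    have dH: "((\<lambda>y. (poly H y - poly H 1) / (y - 1)) \<longlongrightarrow> 0) (at 1)"
      using poly_DERIV[of H 1] unfolding has_field_derivative_iff H_def by (simp add: p0_at1)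
    have "((\<lambda>y. (GB d q y - GB d q 1) / (y - 1)) \<longlongrightarrow> 0) (at 1)"
    proof (rule filterlim_split_at)
      have "((\<lambda>y. (poly H y - poly H 1) / (y - 1)) \<longlongrightarrow> 0) (at_left 1)"
        by (rule tendsto_mono[OF _ dH]) (simp add: at_le)
      moreover have "eventually (\<lambda>y. (poly H y - poly H 1) / (y - 1) = (GB d q y - GB d q 1) / (y - 1)) (at_left (1::real))"
        using eventually_at_left_real[where a="1::real" and b=0, OF zero_less_one]
        by eventually_elim (simp add: GBH G1 H_def Hp_at1)
      ultimately show "((\<lambda>y. (GB d q y - GB d q 1) / (y - 1)) \<longlongrightarrow> 0) (at_left 1)"
        by (rule Lim_transform_eventually)
    next
      have "eventually (\<lambda>y. 0 = (GB d q y - GB d q 1) / (y - 1)) (at_right (1::real))"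
      proof -
        have ev: "eventually (\<lambda>y. y \<in> {1<..<2}) (at_right (1::real))"
          by (rule eventually_at_right_real) simp
        then show ?thesis by eventually_elim (simp add: GB0 G1)
      qed
      then show "((\<lambda>y. (GB d q y - GB d q 1) / (y - 1)) \<longlongrightarrow> 0) (at_right 1)"
        by (rule Lim_transform_eventually[OF tendsto_const])
    qed
    then have "(GB d q has_real_derivative 0) (at 1)"
      unfolding has_field_derivative_iff .
    then show ?thesis using 3 pb by (simp add: H_def)
  qed
qed

lemma momg:
  fixes p :: "real poly"
  assumes cc: "\<forall>k. coeff p k \<noteq> 0 \<longrightarrow> odd k \<and> k \<le> 2*m+1" and d1: "d \<ge> 1"
  shows "Bmom d (2*k+1) (pbar p) = (\<Sum>j\<le>m. coeff p (2*j+1) / ((real d + 2 + 2 * real k) + 2 * real j))"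
proof -
  have e: "d - 1 + (2*k+1) = d + 2*k" using d1 by simp
  have "Bmom d (2*k+1) (pbar p) = (\<Sum>j\<le>m. coeff p (2*j+1) / (real (d + 2*k) + 2 * real j + 2))"
    unfolding Bmom_def e by (rule integral_unique[OF mom_general[OF cc]])
  also have "\<dots> = (\<Sum>j\<le>m. coeff p (2*j+1) / ((real d + 2 + 2 * real k) + 2 * real j))"
  proof (rule sum.cong[OF refl])
    fix j
    have "real (d + 2*k) + 2 * real j + 2 = (real d + 2 + 2 * real k) + 2 * real j" by simp
    then show "coeff p (2*j+1) / (real (d + 2*k) + 2 * real j + 2) = coeff p (2*j+1) / ((real d + 2 + 2 * real k) + 2 * real j)"
      by simp
  qed
  finally show ?thesis .
qed

theorem lemmaB13:
  fixes d q :: nat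
  assumes "d \<ge> 1" and "q \<ge> 2" and "even q"
  shows "(\<exists>!(C, p). C \<noteq> (0::real) \<and>
              (\<forall>k. coeff p k \<noteq> 0 \<longrightarrow> odd k \<and> k \<le> q + 1) \<and>
              M_class d q (pbar p) \<and>
              integral {0..} (\<lambda>x. x ^ (d + q) * pbar p x) = C \<and>
              poly p 1 = 0)
       \<and> (\<forall>C p. C \<noteq> (0::real) \<and>
              (\<forall>k. coeff p k \<noteq> 0 \<longrightarrow> odd k \<and> k \<le> q + 1) \<and>
              M_class d q (pbar p) \<and>
              integral {0..} (\<lambda>x. x ^ (d + q) * pbar p x) = C \<and>
              poly p 1 = 0
            \<longrightarrow> (\<forall>x>0. (GB d q has_real_derivative pbar p x) (at x)))"
proof -
  have d1: "d \<ge> 1" using assms(1) .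
  obtain m where q: "q = 2*m" using \<open>even q\<close> by (auto elim: evenE)
  have m1: "m \<ge> 1" using q \<open>q \<ge> 2\<close> by simp
  define \<alpha> where "\<alpha> = real d / 2"
  have a0: "\<alpha> > 0" using d1 by (simp add: \<alpha>_def)
  define p0 where "p0 = pderiv (Hp m \<alpha>)"
  have qq: "q + 1 = 2*m+1" by (simp add: q)
  have cc0: "\<forall>k. coeff p0 k \<noteq> 0 \<longrightarrow> odd k \<and> k \<le> 2*m+1"
    unfolding p0_def by (rule coeff_p0)
  have p01: "poly p0 1 = 0" by (simp add: p0_def p0_at1)
  have momk: "Bmom d (2*k+1) (pbar p0) = - Kc m \<alpha> * real (d + 2*k) * Tk m \<alpha> k" for k
  proof -
    have e: "d - 1 + (2*k+1) = d + 2*k" using d1 by simp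
    show ?thesis unfolding Bmom_def e p0_def \<alpha>_def
      by (rule integral_unique[OF mom_p0_closed[OF d1]])
  qed
  have bpos: "bsph d > 0" using d1 by (rule bsph_pos)
  have B1: "Bmom d 1 (pbar p0) = - real d / bsph d"
    using momk[of 0] M0_value[OF d1 m1] by (simp add: \<alpha>_def)
  have B1nz: "- real d / bsph d \<noteq> 0" using d1 bpos by simp
  have Bk0: "Bmom d (2*k+1) (pbar p0) = 0" if "1 \<le> k" "k \<le> m-1" for k
    using momk[of k] Tk_zero[OF a0 that] by simp
  have Bq: "Bmom d (q+1) g = integral {0..} (\<lambda>x. x ^ (d + q) * g x)" for g
  proof -
    have "d - 1 + (q+1) = d + q" using d1 by simp
    then show ?thesis by (simp add: Bmom_def)
  qed
  define C0 where "C0 = integral {0..} (\<lambda>x. x ^ (d + q) * pbar p0 x)"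
  have uniq: "p = p0" if ccp: "\<forall>k. coeff p k \<noteq> 0 \<longrightarrow> odd k \<and> k \<le> 2*m+1" and p1: "poly p 1 = 0"
    and pB1: "Bmom d 1 (pbar p) = - real d / bsph d"
    and pBk: "\<forall>k. 1 \<le> k \<longrightarrow> k \<le> m-1 \<longrightarrow> Bmom d (2*k+1) (pbar p) = 0" for p
  proof -
    define a where "a j = coeff p (2*j+1) - coeff p0 (2*j+1)" for j
    define S where "S = (\<lambda>k. real d + 2 + 2 * real k) ` {..<m}"
    have finS: "finite S" by (simp add: S_def)
    have cardS: "card S = m" unfolding S_def by (subst card_image) (auto simp: inj_on_def)
    have posS: "\<forall>s\<in>S. s > 0" by (auto simp: S_def)
    have momS: "\<forall>s\<in>S. (\<Sum>j\<le>m. a j / (s + 2 * real j)) = 0"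
    proof
      fix s assume "s \<in> S"
      then obtain k where k: "k < m" "s = real d + 2 + 2 * real k" by (auto simp: S_def)
      have eqB: "Bmom d (2*k+1) (pbar p) = Bmom d (2*k+1) (pbar p0)"
      proof (cases "k = 0")
        case True then show ?thesis using pB1 B1 by simp
      next
        case False then show ?thesis using pBk Bk0[of k] k by simp
      qed
      have "(\<Sum>j\<le>m. a j / (s + 2 * real j)) = Bmom d (2*k+1) (pbar p) - Bmom d (2*k+1) (pbar p0)"
        unfolding momg[OF ccp d1] momg[OF cc0 d1] a_def k(2) sum_subtractf[symmetric] diff_divide_distrib ..
      then show "(\<Sum>j\<le>m. a j / (s + 2 * real j)) = 0" using eqB by simp
    qed
    have tot: "(\<Sum>j\<le>m. a j) = 0"
      using poly_odd[OF ccp, of 1] poly_odd[OF cc0, of 1] p1 p01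
      by (simp add: a_def sum_subtractf)
    have a0': "\<forall>j\<le>m. a j = 0" by (rule cauchy_uniq[OF finS cardS posS momS tot])
    show "p = p0"
    proof (rule poly_eqI)
      fix n
      show "coeff p n = coeff p0 n"
      proof (cases "odd n \<and> n \<le> 2*m+1")
        case True
        then have "n = 2 * ((n - 1) div 2) + 1" "(n - 1) div 2 \<le> m" by presburger+
        then show ?thesis using a0'[rule_format, of "(n - 1) div 2"] unfolding a_def by simp
      next
        case False
        then show ?thesis using ccp cc0 by metis
      qed
    qed
  qed
  have C0nz: "C0 \<noteq> 0"
  proof
    assume C00: "C0 = 0"
    define a where "a j = coeff p0 (2*j+1)" for j
    define S where "S = (\<lambda>k. real d + 2 + 2 * real k) ` {1..m}"
    have finS: "finite S" by (simp add: S_def)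
    have cardS: "card S = m" unfolding S_def by (subst card_image) (auto simp: inj_on_def)
    have posS: "\<forall>s\<in>S. s > 0" by (auto simp: S_def)
    have momS: "\<forall>s\<in>S. (\<Sum>j\<le>m. a j / (s + 2 * real j)) = 0"
    proof
      fix s assume "s \<in> S"
      then obtain k where k: "1 \<le> k" "k \<le> m" "s = real d + 2 + 2 * real k" by (auto simp: S_def)
      have "(\<Sum>j\<le>m. a j / (s + 2 * real j)) = Bmom d (2*k+1) (pbar p0)"
        unfolding momg[OF cc0 d1] a_def k(3) ..
      also have "\<dots> = 0"
      proof (cases "k = m")
        case True
        then have "2*k+1 = q+1" by (simp add: q)
        then show ?thesis using Bq[of "pbar p0"] C00 by (simp add: C0_def)
      next
        case False then show ?thesis using Bk0 k by simp
      qed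
      finally show "(\<Sum>j\<le>m. a j / (s + 2 * real j)) = 0" .
    qed
    have tot: "(\<Sum>j\<le>m. a j) = 0"
      using poly_odd[OF cc0, of 1] p01 by (simp add: a_def)
    have a0': "\<forall>j\<le>m. a j = 0" by (rule cauchy_uniq[OF finS cardS posS momS tot])
    have "Bmom d (2*0+1) (pbar p0) = 0"
      unfolding momg[OF cc0 d1] using a0' by (simp add: a_def)
    with B1 B1nz show False by simp
  qed
  have Mc: "M_class d q (pbar p0)"
    unfolding M_class_def
  proof (intro conjI ballI impI)
    fix i assume "i \<in> {1..q+1}" "odd i"
    show "(\<lambda>x. x ^ (d - 1 + i) * pbar p0 x) integrable_on {0..}"
      using mom_general[OF cc0] by blast
  next
    show "Bmom d 1 (pbar p0) = - real d / bsph d" by (rule B1)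
  next
    fix i assume i: "i \<in> {3..q-1}" "odd i"
    then have "i = 2 * (i div 2) + 1" "1 \<le> i div 2" "i div 2 \<le> m - 1" using q by auto
    then show "Bmom d i (pbar p0) = 0" using Bk0[of "i div 2"] by metis
  next
    show "Bmom d (q+1) (pbar p0) \<noteq> 0" using Bq[of "pbar p0"] C0nz by (simp add: C0_def)
  qed
  have ccq: "(\<forall>k. coeff p k \<noteq> 0 \<longrightarrow> odd k \<and> k \<le> q + 1) \<longleftrightarrow> (\<forall>k. coeff p k \<noteq> 0 \<longrightarrow> odd k \<and> k \<le> 2*m+1)" for p :: "real poly"
    unfolding qq ..
  have uniq': "p = p0" if "(\<forall>k. coeff p k \<noteq> 0 \<longrightarrow> odd k \<and> k \<le> q + 1)" "M_class d q (pbar p)" "poly p 1 = 0" for p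
  proof (rule uniq)
    show "\<forall>k. coeff p k \<noteq> 0 \<longrightarrow> odd k \<and> k \<le> 2*m+1" using that(1) ccq by blast
    show "poly p 1 = 0" by fact
    show "Bmom d 1 (pbar p) = - real d / bsph d" using that(2) by (simp add: M_class_def)
    show "\<forall>k. 1 \<le> k \<longrightarrow> k \<le> m-1 \<longrightarrow> Bmom d (2*k+1) (pbar p) = 0"
    proof (intro allI impI)
      fix k assume "1 \<le> k" "k \<le> m - 1"
      then have "2*k+1 \<in> {3..q-1}" "odd (2*k+1)" using q by auto
      then show "Bmom d (2*k+1) (pbar p) = 0" using that(2) by (simp add: M_class_def)
    qed
  qed
  show ?thesis
  proof
    show "\<exists>!(C, p). C \<noteq> (0::real) \<and>
              (\<forall>k. coeff p k \<noteq> 0 \<longrightarrow> odd k \<and> k \<le> q + 1) \<and>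
              M_class d q (pbar p) \<and>
              integral {0..} (\<lambda>x. x ^ (d + q) * pbar p x) = C \<and>
              poly p 1 = 0"
    proof (rule ex1I[of _ "(C0, p0)"])
      show "case (C0, p0) of (C, p) \<Rightarrow> C \<noteq> (0::real) \<and>
              (\<forall>k. coeff p k \<noteq> 0 \<longrightarrow> odd k \<and> k \<le> q + 1) \<and>
              M_class d q (pbar p) \<and>
              integral {0..} (\<lambda>x. x ^ (d + q) * pbar p x) = C \<and>
              poly p 1 = 0"
        using C0nz cc0 ccq[of p0] Mc p01 by (simp add: C0_def)
    next
      fix z assume z: "case z of (C, p) \<Rightarrow> C \<noteq> (0::real) \<and>
              (\<forall>k. coeff p k \<noteq> 0 \<longrightarrow> odd k \<and> k \<le> q + 1) \<and>
              M_class d q (pbar p) \<and>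
              integral {0..} (\<lambda>x. x ^ (d + q) * pbar p x) = C \<and>
              poly p 1 = 0"
      obtain C p where zz: "z = (C, p)" by (cases z)
      have pp: "p = p0" using z uniq' unfolding zz by auto
      then have "C = C0" using z unfolding zz C0_def by auto
      with pp show "z = (C0, p0)" by (simp add: zz)
    qed
  next
    show "\<forall>C p. C \<noteq> (0::real) \<and>
              (\<forall>k. coeff p k \<noteq> 0 \<longrightarrow> odd k \<and> k \<le> q + 1) \<and>
              M_class d q (pbar p) \<and>
              integral {0..} (\<lambda>x. x ^ (d + q) * pbar p x) = C \<and>
              poly p 1 = 0
            \<longrightarrow> (\<forall>x>0. (GB d q has_real_derivative pbar p x) (at x))"
    proof (intro allI impI)
      fix C p x
      assume h: "C \<noteq> (0::real) \<and>
              (\<forall>k. coeff p k \<noteq> 0 \<longrightarrow> odd k \<and> k \<le> q + 1) \<and>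
              M_class d q (pbar p) \<and>
              integral {0..} (\<lambda>x. x ^ (d + q) * pbar p x) = C \<and>
              poly p 1 = 0" and x: "(x::real) > 0"
      have "p = p0" using h uniq' by blast
      then show "(GB d q has_real_derivative pbar p x) (at x)"
        using GB_deriv[OF q m1 x] by (simp add: p0_def \<alpha>_def)
    qed
  qed
qed


end
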